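(* For every integer $n\ge 1$, the polytope $\overline{Q}_n=\sum_{S\in\mathcal{I}_n}\Delta_S\subseteq\mathbb{R}^{n+1}$ is combinatorially equivalent to the $n$-th stellohedron $\mathrm{Stell}_n$.
   Context: Sums are Minkowski sums. $\mathcal{I}_n=\{S\cup\{n+1\}: S\subseteq[n],\ |S|\in\{1,2\}\}$ and, for $S\subseteq[n+1]$, $\Delta_S=\mathrm{conv}\{e_i: i\in S\}\subseteq\mathbb{R}^{n+1}$. Let $\mathrm{st}_n$ be the star graph on $[n+1]$ with edges $\{i,n+1\}$, $i=1,\dots,n$. The stellohedron is the graph associahedron of $\mathrm{st}_n$: $\mathrm{Stell}_n=\sum_{S}\Delta_S$, the sum over all nonempty $S\subseteq[n+1]$ inducing a connected subgraph of $\mathrm{st}_n$ (i.e. $S$ a singleton or $n+1\in S$). Two polytopes are combinatorially equivalent if their face posets (ordered by inclusion) are isomorphic. *)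

theory Defs
  imports "HOL-Analysis.Analysis" "HOL-Library.Set_Algebras"
begin

text \<open>Coordinates of the ambient space are indexed by a finite type 'd; the
  distinguished element c plays the role of the index n+1, and the remaining
  elements play the role of [n].\<close>

definition simplex_of :: "'d::finite set \<Rightarrow> (real^'d) set" where
  "simplex_of S = convex hull ((\<lambda>i. axis i 1) ` S)"

definition minkowski_sum :: "'a set \<Rightarrow> ('a \<Rightarrow> (real^'d) set) \<Rightarrow> (real^'d) set" where
  "minkowski_sum I D = (\<Sum>S\<in>I. D S)"

definition I_family :: "'d::finite \<Rightarrow> 'd set set" where
  "I_family c = {insert c S | S. S \<subseteq> UNIV - {c} \<and> card S \<in> {1,2}}"

text \<open>Connected nonempty subsets of the star graph with centre c.\<close>
definition star_tubes :: "'d::finite \<Rightarrow> 'd set set" where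
  "star_tubes c = {S. S \<noteq> {} \<and> (card S = 1 \<or> c \<in> S)}"

definition Qbar :: "'d::finite \<Rightarrow> (real^'d) set" where
  "Qbar c = minkowski_sum (I_family c) simplex_of"

definition stellohedron :: "'d::finite \<Rightarrow> (real^'d) set" where
  "stellohedron c = minkowski_sum (star_tubes c) simplex_of"

definition face_poset :: "'a::real_vector set \<Rightarrow> 'a set set" where
  "face_poset P = {F. F face_of P}"

definition comb_equiv :: "'a::real_vector set \<Rightarrow> 'b::real_vector set \<Rightarrow> bool" where
  "comb_equiv P Q \<longleftrightarrow> (\<exists>f. bij_betw f (face_poset P) (face_poset Q) \<and>
     (\<forall>F\<in>face_poset P. \<forall>G\<in>face_poset P. F \<subseteq> G \<longleftrightarrow> f F \<subseteq> f G))"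

end

theory Submission
  imports Defs
begin

definition fd :: "'a::real_inner set \<Rightarrow> 'a \<Rightarrow> 'a set" where
  "fd P w = {x\<in>P. \<forall>y\<in>P. inner w y \<le> inner w x}"

lemma fd_plus: "fd (A + B) w = fd A w + fd B w"
proof
  show "fd (A + B) w \<subseteq> fd A w + fd B w"
  proof
    fix x assume x: "x \<in> fd (A + B) w"
    then obtain a b where ab: "a \<in> A" "b \<in> B" "x = a + b"
      unfolding fd_def by (auto elim: set_plus_elim)
    have "a \<in> fd A w"
    proof -
      { fix a' assume "a' \<in> A"
        then have "a' + b \<in> A + B" using ab by auto
        then have "inner w (a' + b) \<le> inner w x" using x unfolding fd_def by auto
        then have "inner w a' \<le> inner w a" using ab by (simp add: inner_add_right) }
      then show ?thesis using ab unfolding fd_def by auto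
    qed
    moreover have "b \<in> fd B w"
    proof -
      { fix b' assume "b' \<in> B"
        then have "a + b' \<in> A + B" using ab by auto
        then have "inner w (a + b') \<le> inner w x" using x unfolding fd_def by auto
        then have "inner w b' \<le> inner w b" using ab by (simp add: inner_add_right) }
      then show ?thesis using ab unfolding fd_def by auto
    qed
    ultimately show "x \<in> fd A w + fd B w" using ab by auto
  qed
next
  show "fd A w + fd B w \<subseteq> fd (A + B) w"
  proof
    fix x assume "x \<in> fd A w + fd B w"
    then obtain a b where ab: "a \<in> fd A w" "b \<in> fd B w" "x = a + b"
      by (auto elim: set_plus_elim)
    { fix y assume "y \<in> A + B"
      then obtain a' b' where "a' \<in> A" "b' \<in> B" "y = a' + b'" by (auto elim: set_plus_elim)
      then have "inner w y \<le> inner w x" using ab unfolding fd_def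
        by (auto simp: inner_add_right intro: add_mono) }
    moreover have "x \<in> A + B" using ab unfolding fd_def by auto
    ultimately show "x \<in> fd (A + B) w" unfolding fd_def by auto
  qed
qed

lemma fd_sum: "finite I \<Longrightarrow> fd (\<Sum>S\<in>I. D S) w = (\<Sum>S\<in>I. fd (D S) w)"
proof (induction I rule: finite_induct)
  case empty
  then show ?case by (auto simp: fd_def)
next
  case (insert x F)
  then show ?case by (simp add: fd_plus)
qed

lemma fd_nonempty:
  fixes P :: "'a::real_inner set"
  assumes "compact P" "P \<noteq> {}" shows "fd P w \<noteq> {}"
proof -
  have "continuous_on P (\<lambda>x. inner w x)" by (intro continuous_intros)
  then obtain x where "x \<in> P" "\<forall>y\<in>P. inner w y \<le> inner w x"
    using continuous_attains_sup[OF assms] by blast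
  then show ?thesis unfolding fd_def by auto
qed

lemma fd_transfer:
  assumes "fd (A + B) w \<subseteq> fd (A + B) w'" "fd B w \<noteq> {}"
  shows "fd A w \<subseteq> fd A w'"
proof
  fix a assume a: "a \<in> fd A w"
  obtain b where b: "b \<in> fd B w" using assms(2) by auto
  have "a + b \<in> fd (A + B) w" using a b fd_plus by blast
  then have ab: "a + b \<in> fd (A + B) w'" using assms(1) by auto
  { fix a' assume "a' \<in> A"
    then have "a' + b \<in> A + B" using b unfolding fd_def by auto
    then have "inner w' (a' + b) \<le> inner w' (a + b)" using ab unfolding fd_def by auto
    then have "inner w' a' \<le> inner w' a" by (simp add: inner_add_right) }
  then show "a \<in> fd A w'" using a unfolding fd_def by auto
qed

lemma fd_face:
  fixes X :: "'a::euclidean_space set"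
  assumes "convex X" shows "fd X w face_of X"
proof (cases "fd X w = {}")
  case True then show ?thesis by simp
next
  case False
  then obtain x0 where x0: "x0 \<in> fd X w" by auto
  have "fd X w = X \<inter> {x. w \<bullet> x = w \<bullet> x0}"
    using x0 unfolding fd_def by (auto intro: order.antisym)
  moreover have "\<And>x. x \<in> X \<Longrightarrow> w \<bullet> x \<le> w \<bullet> x0" using x0 unfolding fd_def by auto
  ultimately show ?thesis using face_of_Int_supporting_hyperplane_le[OF assms] by metis
qed

lemma face_iff_fd:
  fixes X :: "'a::euclidean_space set"
  assumes "polytope X"
  shows "F face_of X \<longleftrightarrow> F = {} \<or> (\<exists>w. F = fd X w)"
proof
  assume F: "F face_of X"
  then have "F exposed_face_of X"
    using exposed_face_of_polyhedron polytope_imp_polyhedron assms by blast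
  then obtain a b where ab: "X \<subseteq> {x. a \<bullet> x \<le> b}" "F = X \<inter> {x. a \<bullet> x = b}"
    unfolding exposed_face_of_def by blast
  show "F = {} \<or> (\<exists>w. F = fd X w)"
  proof (cases "F = {}")
    case False
    then obtain f where f: "f \<in> F" by auto
    have "F = fd X a"
      using ab f unfolding fd_def by (auto intro: order.antisym)
    then show ?thesis by blast
  qed simp
next
  assume "F = {} \<or> (\<exists>w. F = fd X w)"
  then show "F face_of X"
    using fd_face polytope_imp_convex assms by auto
qed

lemma polytope_plus:
  fixes P Q :: "'a::euclidean_space set"
  assumes "polytope P" "polytope Q" shows "polytope (P + Q)"
proof -
  obtain V W where "finite V" "P = convex hull V" "finite W" "Q = convex hull W"
    using assms unfolding polytope_def by auto
  then show ?thesis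
    by (metis convex_hull_set_plus finite_set_plus polytope_convex_hull)
qed

lemma polytope_sum:
  fixes D :: "'b \<Rightarrow> 'a::euclidean_space set"
  shows "(\<And>S. S \<in> I \<Longrightarrow> polytope (D S)) \<Longrightarrow> polytope (\<Sum>S\<in>I. D S)"
proof (induction I rule: infinite_finite_induct)
  case (infinite A) then show ?case by (simp add: polytope_sing)
next
  case empty then show ?case by (simp add: polytope_sing)
next
  case (insert x F) then show ?case by (simp add: polytope_plus)
qed

lemma nonempty_sum:
  fixes D :: "'b \<Rightarrow> 'a::comm_monoid_add set"
  shows "(\<And>S. S \<in> I \<Longrightarrow> D S \<noteq> {}) \<Longrightarrow> (\<Sum>S\<in>I. D S) \<noteq> {}"
proof (induction I rule: infinite_finite_induct)
  case (insert x F)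
  then obtain a b where "a \<in> D x" "b \<in> (\<Sum>S\<in>F. D S)" by blast
  then have "a + b \<in> D x + (\<Sum>S\<in>F. D S)" by (rule set_plus_intro)
  then show ?case using insert by auto
qed auto

theorem comb_equiv_plus:
  fixes P Q :: "'a::euclidean_space set"
  assumes P: "polytope P" "P \<noteq> {}" and Q: "polytope Q" "Q \<noteq> {}"
    and R: "\<And>w w'. fd P w \<subseteq> fd P w' \<Longrightarrow> fd Q w \<subseteq> fd Q w'"
  shows "comb_equiv P (P + Q)"
proof -
  define K where "K = P + Q"
  have K: "polytope K" "K \<noteq> {}" using P Q polytope_plus unfolding K_def by auto
  have ne: "\<And>w. fd P w \<noteq> {}" "\<And>w. fd Q w \<noteq> {}" "\<And>w. fd K w \<noteq> {}"
    using fd_nonempty[OF polytope_imp_compact[OF P(1)] P(2)]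
      fd_nonempty[OF polytope_imp_compact[OF Q(1)] Q(2)]
      fd_nonempty[OF polytope_imp_compact[OF K(1)] K(2)] by auto
  have O: "fd K w \<subseteq> fd K w' \<longleftrightarrow> fd P w \<subseteq> fd P w'" for w w'
  proof
    assume "fd K w \<subseteq> fd K w'"
    then show "fd P w \<subseteq> fd P w'" using fd_transfer[OF _ ne(2)] unfolding K_def by simp
  next
    assume "fd P w \<subseteq> fd P w'"
    then have "fd Q w \<subseteq> fd Q w'" by (rule R)
    then show "fd K w \<subseteq> fd K w'" using \<open>fd P w \<subseteq> fd P w'\<close> unfolding K_def fd_plus
      by (rule set_plus_mono2[rotated])
  qed
  define g where "g G = (SOME w. G = fd P w)" for G
  define f where "f G = (if G = {} then {} else fd K (g G))" for G
  have g: "G = fd P (g G)" if "G face_of P" "G \<noteq> {}" for G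
  proof -
    have "\<exists>w. G = fd P w" using that face_iff_fd[OF P(1)] by blast
    then show ?thesis unfolding g_def by (rule someI_ex)
  qed
  have ord: "F \<subseteq> G \<longleftrightarrow> f F \<subseteq> f G" if "F face_of P" "G face_of P" for F G
  proof (cases "F = {}")
    case True then show ?thesis unfolding f_def by simp
  next
    case False
    show ?thesis
    proof (cases "G = {}")
      case True then show ?thesis using False ne(3) unfolding f_def by simp
    next
      case False2: False
      have "F \<subseteq> G \<longleftrightarrow> fd P (g F) \<subseteq> fd P (g G)" using g[OF that(1) False] g[OF that(2) False2] by simp
      also have "\<dots> \<longleftrightarrow> f F \<subseteq> f G" using O False False2 unfolding f_def by simp
      finally show ?thesis .
    qed
  qed
  have inj: "inj_on f (face_poset P)"
    unfolding inj_on_def face_poset_def using ord by blast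
  have img: "f ` face_poset P = face_poset K"
  proof
    show "f ` face_poset P \<subseteq> face_poset K"
    proof
      fix H assume "H \<in> f ` face_poset P"
      then have "H = {} \<or> (\<exists>w. H = fd K w)" unfolding f_def by auto
      then show "H \<in> face_poset K" using face_iff_fd[OF K(1)] unfolding face_poset_def by simp
    qed
  next
    show "face_poset K \<subseteq> f ` face_poset P"
    proof
      fix H assume "H \<in> face_poset K"
      then have "H = {} \<or> (\<exists>w. H = fd K w)" using face_iff_fd[OF K(1)] unfolding face_poset_def by auto
      then show "H \<in> f ` face_poset P"
      proof
        assume "H = {}"
        moreover have "{} \<in> face_poset P" unfolding face_poset_def by simp
        ultimately show ?thesis unfolding f_def by force
      next
        assume "\<exists>w. H = fd K w"
        then obtain w where w: "H = fd K w" by auto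
        define G where "G = fd P w"
        have G: "G face_of P" "G \<noteq> {}" using face_iff_fd[OF P(1)] ne unfolding G_def by auto
        have "fd P (g G) = fd P w" using g[OF G] unfolding G_def by simp
        then have "fd K (g G) = fd K w" using O by (metis order.antisym order.refl)
        then have "f G = H" using w G unfolding f_def by simp
        then show ?thesis using G unfolding face_poset_def by auto
      qed
    qed
  qed
  have "bij_betw f (face_poset P) (face_poset K)" using inj img unfolding bij_betw_def by simp
  moreover have "\<forall>F\<in>face_poset P. \<forall>G\<in>face_poset P. F \<subseteq> G \<longleftrightarrow> f F \<subseteq> f G"
    using ord unfolding face_poset_def by simp
  ultimately show ?thesis unfolding comb_equiv_def K_def by blast
qed

lemma fd_hull_mono:
  fixes V :: "'a::euclidean_space set"
  assumes V: "finite V" "V \<noteq> {}" and sub: "fd V w \<subseteq> fd V w'"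
  shows "fd (convex hull V) w \<subseteq> fd (convex hull V) w'"
proof
  fix x assume x: "x \<in> fd (convex hull V) w"
  obtain v0 where v0: "v0 \<in> fd V w" using fd_nonempty[OF finite_imp_compact[OF V(1)] V(2)] by auto
  obtain v1 where v1: "v1 \<in> fd V w'" using fd_nonempty[OF finite_imp_compact[OF V(1)] V(2)] by auto
  define m where "m = w \<bullet> v0"
  define m' where "m' = w' \<bullet> v1"
  have bnd: "convex hull V \<subseteq> {y. w \<bullet> y \<le> m}"
  proof (rule hull_minimal)
    show "V \<subseteq> {y. w \<bullet> y \<le> m}" using v0 unfolding fd_def m_def by auto
  qed (rule convex_halfspace_le)
  have bnd': "convex hull V \<subseteq> {y. w' \<bullet> y \<le> m'}"
  proof (rule hull_minimal)
    show "V \<subseteq> {y. w' \<bullet> y \<le> m'}" using v1 unfolding fd_def m'_def by auto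
  qed (rule convex_halfspace_le)
  have v0V: "v0 \<in> V" using v0 unfolding fd_def by simp
  have v0h: "v0 \<in> convex hull V" using v0V by (rule hull_inc)
  have xh: "x \<in> convex hull V" using x unfolding fd_def by simp
  have xm1: "w \<bullet> x \<le> m" using bnd xh by blast
  have xm2: "m \<le> w \<bullet> x" using x v0h unfolding fd_def m_def by simp
  have xm: "w \<bullet> x = m" using xm1 xm2 by simp
  have "x \<in> {y. \<exists>u. (\<forall>x\<in>V. 0 \<le> u x) \<and> sum u V = 1 \<and> (\<Sum>x\<in>V. u x *\<^sub>R x) = y}"
    using xh convex_hull_finite[OF V(1)] by simp
  then obtain u where u: "\<forall>y\<in>V. 0 \<le> u y" "sum u V = 1" "(\<Sum>y\<in>V. u y *\<^sub>R y) = x"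
    by blast
  have wx: "w \<bullet> x = (\<Sum>y\<in>V. u y * (w \<bullet> y))"
    unfolding u(3)[symmetric] by (simp add: inner_sum_right)
  have w'x: "w' \<bullet> x = (\<Sum>y\<in>V. u y * (w' \<bullet> y))"
    unfolding u(3)[symmetric] by (simp add: inner_sum_right)
  have um: "(\<Sum>y\<in>V. u y * m) = m" "(\<Sum>y\<in>V. u y * m') = m'"
    using u(2) by (simp_all add: sum_distrib_right[symmetric])
  have "(\<Sum>y\<in>V. u y * (m - w \<bullet> y)) = (\<Sum>y\<in>V. u y * m) - (\<Sum>y\<in>V. u y * (w \<bullet> y))"
    by (simp add: right_diff_distrib sum_subtractf)
  then have "(\<Sum>y\<in>V. u y * (m - w \<bullet> y)) = m - w \<bullet> x" using um wx by simp
  then have s0: "(\<Sum>y\<in>V. u y * (m - w \<bullet> y)) = 0" using xm by simp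
  have nn: "\<forall>y\<in>V. 0 \<le> u y * (m - w \<bullet> y)"
  proof
    fix y assume y: "y \<in> V"
    then have "y \<in> convex hull V" by (rule hull_inc)
    then have "w \<bullet> y \<le> m" using bnd by auto
    then show "0 \<le> u y * (m - w \<bullet> y)" using u(1) y by simp
  qed
  have z: "\<forall>y\<in>V. u y * (m - w \<bullet> y) = 0"
    using sum_nonneg_eq_0_iff[OF V(1), of "\<lambda>y. u y * (m - w \<bullet> y)"] nn s0 by simp
  have "\<forall>y\<in>V. u y * (w' \<bullet> y) = u y * m'"
  proof
    fix y assume y: "y \<in> V"
    show "u y * (w' \<bullet> y) = u y * m'"
    proof (cases "u y = 0")
      case False
      then have "w \<bullet> y = m" using z y by auto
      then have "y \<in> fd V w" using y v0 unfolding fd_def m_def by auto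
      then have "y \<in> fd V w'" using sub by auto
      then have "w' \<bullet> v1 \<le> w' \<bullet> y" "w' \<bullet> y \<le> w' \<bullet> v1" using v1 unfolding fd_def by auto
      then have "w' \<bullet> y = m'" unfolding m'_def by simp
      then show ?thesis by simp
    qed simp
  qed
  then have "w' \<bullet> x = m'"
    using w'x um(2) sum.cong[of V V "\<lambda>y. u y * (w' \<bullet> y)" "\<lambda>y. u y * m'"] by simp
  moreover have "\<forall>y\<in>convex hull V. w' \<bullet> y \<le> m'" using bnd' by blast
  ultimately show "x \<in> fd (convex hull V) w'" using xh unfolding fd_def by simp
qed

lemma simplex_polytope: "polytope (simplex_of S)"
  unfolding simplex_of_def by (rule polytope_convex_hull) simp

lemma simplex_nonempty: "S \<noteq> {} \<Longrightarrow> simplex_of S \<noteq> {}"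
  unfolding simplex_of_def by simp

lemma vertex_in: "i \<in> S \<Longrightarrow> axis i 1 \<in> simplex_of S"
  unfolding simplex_of_def by (rule hull_inc) simp

lemma vertex_fd:
  assumes "i \<in> T"
  shows "axis i 1 \<in> fd (simplex_of T) w \<longleftrightarrow> (\<forall>j\<in>T. w $ j \<le> w $ i)"
proof
  assume "axis i 1 \<in> fd (simplex_of T) w"
  then have a: "\<forall>y\<in>simplex_of T. w \<bullet> y \<le> w \<bullet> axis i 1" unfolding fd_def by simp
  show "\<forall>j\<in>T. w $ j \<le> w $ i"
  proof
    fix j assume "j \<in> T"
    then have "w \<bullet> axis j 1 \<le> w \<bullet> axis i 1" using a vertex_in by blast
    then show "w $ j \<le> w $ i" by (simp add: inner_axis)
  qed
next
  assume a: "\<forall>j\<in>T. w $ j \<le> w $ i"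
  have "simplex_of T \<subseteq> {y. w \<bullet> y \<le> w $ i}"
    unfolding simplex_of_def
    by (rule hull_minimal) (use a in \<open>auto simp: inner_axis convex_halfspace_le\<close>)
  then show "axis i 1 \<in> fd (simplex_of T) w"
    using vertex_in[OF assms] unfolding fd_def by (auto simp: inner_axis)
qed

lemma summand_transfer:
  fixes D :: "'b \<Rightarrow> 'a::euclidean_space set"
  assumes I: "finite I" "S \<in> I" and D: "\<And>T. T \<in> I \<Longrightarrow> compact (D T) \<and> D T \<noteq> {}"
    and sub: "fd (\<Sum>T\<in>I. D T) w \<subseteq> fd (\<Sum>T\<in>I. D T) w'"
  shows "fd (D S) w \<subseteq> fd (D S) w'"
proof -
  have eq: "(\<Sum>T\<in>I. D T) = D S + (\<Sum>T\<in>I - {S}. D T)"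
    using sum.remove[OF I] by simp
  have "fd (\<Sum>T\<in>I - {S}. D T) w = (\<Sum>T\<in>I - {S}. fd (D T) w)" using I by (simp add: fd_sum)
  also have "\<dots> \<noteq> {}" using D fd_nonempty by (intro nonempty_sum) blast
  finally show ?thesis using fd_transfer[of "D S" _ w w'] sub eq by simp
qed

lemma triple_exists:
  fixes c :: "'d::finite"
  assumes "c \<in> S" "card S \<ge> 3" "i \<in> S" "j \<in> S"
  shows "\<exists>T\<in>I_family c. T \<subseteq> S \<and> i \<in> T \<and> j \<in> T"
proof -
  have cA: "card (S - {c}) \<ge> 2" using assms(1,2) by (simp add: card_Diff_singleton)
  have "card ({i, j} - {c}) \<le> card {i, j}" by (rule card_mono) auto
  also have "card {i, j} \<le> 2" by (simp add: card_insert_if)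
  finally have "card ({i, j} - {c}) \<le> 2" .
  moreover have "{i, j} - {c} \<subseteq> S - {c}" using assms by auto
  ultimately obtain B where B: "{i, j} - {c} \<subseteq> B" "B \<subseteq> S - {c}" "card B = 2"
    using exists_subset_between[of "{i,j} - {c}" 2 "S - {c}"] cA by auto
  have "insert c B \<in> I_family c" unfolding I_family_def using B by auto
  moreover have "insert c B \<subseteq> S" "i \<in> insert c B" "j \<in> insert c B" using B assms by auto
  ultimately show ?thesis by blast
qed

lemma R_sum:
  assumes "finite J" "\<And>S. S \<in> J \<Longrightarrow> fd (D S) w \<subseteq> fd (D S) w'"
  shows "fd (\<Sum>S\<in>J. D S) w \<subseteq> fd (\<Sum>S\<in>J. D S) w'"
  using assms
proof (induction J rule: finite_induct)
  case empty then show ?case by (auto simp: fd_def)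
next
  case (insert x F)
  then show ?case by (simp add: fd_plus set_plus_mono2)
qed

lemma finite_I_family: "finite (I_family (c::'d::finite))"
  by (rule finite_subset[of _ "UNIV :: 'd set set"]) auto

lemma I_family_ne: "T \<in> I_family c \<Longrightarrow> T \<noteq> {}"
  unfolding I_family_def by auto

lemma Qbar_sum: "Qbar c = (\<Sum>T\<in>I_family c. simplex_of T)"
  unfolding Qbar_def minkowski_sum_def by simp

lemma R_simplex:
  fixes c :: "'d::finite"
  assumes S: "c \<in> S" "card S \<ge> 3" and sub: "fd (Qbar c) w \<subseteq> fd (Qbar c) w'"
  shows "fd (simplex_of S) w \<subseteq> fd (simplex_of S) w'"
  unfolding simplex_of_def
proof (rule fd_hull_mono)
  show "finite ((\<lambda>i. axis i 1) ` S)" by simp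
  show "(\<lambda>i. axis i 1) ` S \<noteq> {}" using S by auto
  show "fd ((\<lambda>i. axis i 1) ` S) w \<subseteq> fd ((\<lambda>i. axis i 1) ` S) w'"
  proof
    fix x assume x: "x \<in> fd ((\<lambda>i. axis i 1) ` S) w"
    then have "x \<in> (\<lambda>i. axis i 1) ` S" unfolding fd_def by simp
    then obtain i where i: "i \<in> S" "x = axis i 1" by blast
    have mx: "\<forall>j\<in>S. w $ j \<le> w $ i"
    proof
      fix j assume j: "j \<in> S"
      have "w \<bullet> axis j 1 \<le> w \<bullet> axis i 1" using x i j unfolding fd_def by simp
      then show "w $ j \<le> w $ i" by (simp add: inner_axis)
    qed
    have mx': "w' $ j \<le> w' $ i" if j: "j \<in> S" for j
    proof -
      obtain T where T: "T \<in> I_family c" "T \<subseteq> S" "i \<in> T" "j \<in> T"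
        using triple_exists[OF S i(1) j] by blast
      have "fd (simplex_of T) w \<subseteq> fd (simplex_of T) w'"
      proof (rule summand_transfer[OF finite_I_family T(1)])
        show "compact (simplex_of T') \<and> simplex_of T' \<noteq> {}" if "T' \<in> I_family c" for T'
          using polytope_imp_compact[OF simplex_polytope] simplex_nonempty[OF I_family_ne[OF that]] by simp
        show "fd (\<Sum>T\<in>I_family c. simplex_of T) w \<subseteq> fd (\<Sum>T\<in>I_family c. simplex_of T) w'"
          using sub unfolding Qbar_sum .
      qed
      moreover have "\<forall>j\<in>T. w $ j \<le> w $ i" using mx T(2) by blast
      then have "axis i 1 \<in> fd (simplex_of T) w" using vertex_fd[OF T(3)] by simp
      ultimately have "axis i 1 \<in> fd (simplex_of T) w'" by (rule subsetD)
      then have "\<forall>j\<in>T. w' $ j \<le> w' $ i" using vertex_fd[OF T(3)] by simp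
      then show ?thesis using T(4) by simp
    qed
    have "\<forall>y\<in>(\<lambda>i. axis i 1) ` S. w' \<bullet> y \<le> w' \<bullet> x"
    proof
      fix y :: "real^'d" assume "y \<in> (\<lambda>i. axis i 1) ` S"
      then obtain j where "j \<in> S" "y = axis j 1" by blast
      then show "w' \<bullet> y \<le> w' \<bullet> x" using mx' i(2) by (simp add: inner_axis)
    qed
    then show "x \<in> fd ((\<lambda>i. axis i 1) ` S) w'" using x unfolding fd_def by simp
  qed
qed

lemma simplex_single: "simplex_of {i} = {axis i 1}"
  unfolding simplex_of_def by simp

lemma rest_members:
  fixes c :: "'d::finite"
  assumes "S \<in> star_tubes c - I_family c"
  shows "(\<exists>i. S = {i}) \<or> (c \<in> S \<and> card S \<ge> 3)"
proof (cases "card S = 1")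
  case True then show ?thesis by (auto simp: card_1_singleton_iff)
next
  case False
  have S: "S \<noteq> {}" "c \<in> S" "S \<notin> I_family c" using assms False unfolding star_tubes_def by auto
  have "card S \<noteq> 0" using S(1) by simp
  moreover have "card S \<noteq> 2"
  proof
    assume "card S = 2"
    then have "card (S - {c}) = 1" using S(2) by (simp add: card_Diff_singleton)
    then have "S \<in> I_family c" unfolding I_family_def using S(2)
      by (auto intro!: exI[of _ "S - {c}"])
    then show False using S(3) by simp
  qed
  ultimately have "card S \<ge> 3" using False by linarith
  then show ?thesis using S(2) by blast
qed

theorem mainTheorem13:
  fixes c :: "'d::finite"
  assumes "CARD('d) \<ge> 2"
  shows "comb_equiv (Qbar c) (stellohedron c)"
proof -
  define J where "J = star_tubes c - I_family c"
  have IJ: "I_family c \<subseteq> star_tubes c" unfolding I_family_def star_tubes_def by auto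
  have st: "stellohedron c = Qbar c + (\<Sum>S\<in>J. simplex_of S)"
    unfolding stellohedron_def minkowski_sum_def Qbar_sum J_def
    using sum.subset_diff[OF IJ finite, of simplex_of] by (simp add: add.commute)
  have ne: "simplex_of S \<noteq> {}" if "S \<in> J" for S
    using that simplex_nonempty unfolding J_def star_tubes_def by auto
  show ?thesis unfolding st
  proof (rule comb_equiv_plus)
    show "polytope (Qbar c)" unfolding Qbar_sum by (rule polytope_sum) (rule simplex_polytope)
    show "Qbar c \<noteq> {}" unfolding Qbar_sum
      by (rule nonempty_sum) (use simplex_nonempty I_family_ne in blast)
    show "polytope (\<Sum>S\<in>J. simplex_of S)" by (rule polytope_sum) (rule simplex_polytope)
    show "(\<Sum>S\<in>J. simplex_of S) \<noteq> {}" by (rule nonempty_sum) (rule ne)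
    fix w w' assume sub: "fd (Qbar c) w \<subseteq> fd (Qbar c) w'"
    show "fd (\<Sum>S\<in>J. simplex_of S) w \<subseteq> fd (\<Sum>S\<in>J. simplex_of S) w'"
    proof (rule R_sum)
      show "finite J" by simp
      fix S assume "S \<in> J"
      then have "(\<exists>i. S = {i}) \<or> (c \<in> S \<and> card S \<ge> 3)" using rest_members unfolding J_def by blast
      then show "fd (simplex_of S) w \<subseteq> fd (simplex_of S) w'"
      proof
        assume "\<exists>i. S = {i}"
        then show ?thesis by (auto simp: simplex_single fd_def)
      next
        assume "c \<in> S \<and> card S \<ge> 3"
        then show ?thesis using R_simplex sub by blast
      qed
    qed
  qed
qed

end
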